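(* Let $k$ be a positive integer, $\mathbb{S}=\mathbb{R}/2\pi\mathbb{Z}$, and for $t\in\mathbb{S}$ let $$U_k(t)=\bigl(\cos t,\ \sin t,\ \cos 3t,\ \sin 3t,\ \ldots,\ \cos(2k-1)t,\ \sin(2k-1)t\bigr)\in\mathbb{R}^{2k}.$$ Let $t_1,\ldots,t_{2k}\in\mathbb{S}$ be distinct points no two of which are antipodal (i.e. $t_i\neq t_j+\pi \pmod{2\pi}$ for all $i,j$). Then the vectors $U_k(t_1),\ldots,U_k(t_{2k})$ are linearly independent. *)

theory Defs
  imports Complex_Main
begin

text \<open>The curve U_k : S -> R^(2k), with R^(2k) rendered as functions nat => real whose
  relevant components are those with index j < 2k.\<close>
definition U :: "nat \<Rightarrow> real \<Rightarrow> (nat \<Rightarrow> real)" where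
  "U k t = (\<lambda>j. if j < 2 * k then
                   (if even j then cos (real (2 * (j div 2) + 1) * t)
                              else sin (real (2 * (j div 2) + 1) * t))
                 else 0)"

definition lin_indep_family :: "nat \<Rightarrow> nat \<Rightarrow> (nat \<Rightarrow> nat \<Rightarrow> real) \<Rightarrow> bool" where
  "lin_indep_family d n v \<longleftrightarrow>
     (\<forall>c :: nat \<Rightarrow> real. (\<forall>j<d. (\<Sum>i<n. c i * v i j) = 0) \<longrightarrow> (\<forall>i<n. c i = 0))"

end

theory Submission
  imports Defs
begin

inductive_set Tr :: "nat \<Rightarrow> (real \<Rightarrow> real) set" for N :: nat where
  cosI: "j \<le> N \<Longrightarrow> even (N + j) \<Longrightarrow> (\<lambda>t. cos (real j * t)) \<in> Tr N"
| sinI: "j \<le> N \<Longrightarrow> even (N + j) \<Longrightarrow> (\<lambda>t. sin (real j * t)) \<in> Tr N"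
| zeroI: "(\<lambda>t. 0) \<in> Tr N"
| addI: "f \<in> Tr N \<Longrightarrow> g \<in> Tr N \<Longrightarrow> (\<lambda>t. f t + g t) \<in> Tr N"
| scaleI: "f \<in> Tr N \<Longrightarrow> (\<lambda>t. c * f t) \<in> Tr N"

lemma Tr_lin: "f \<in> Tr N \<Longrightarrow> g \<in> Tr N \<Longrightarrow> (\<lambda>t. a * f t + b * g t) \<in> Tr N"
  by (intro addI scaleI)

lemma Tr_eq: "f \<in> Tr N \<Longrightarrow> (\<And>t. g t = f t) \<Longrightarrow> g \<in> Tr N"
proof -
  assume "f \<in> Tr N" "\<And>t. g t = f t"
  then have "g = f" by auto
  thus "g \<in> Tr N" using \<open>f \<in> Tr N\<close> by simp
qed

lemma Tr_mult_sin: "f \<in> Tr N \<Longrightarrow> (\<lambda>t. f t * sin t) \<in> Tr (Suc N)"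
proof (induction rule: Tr.induct)
  case (cosI j)
  show ?case
  proof (cases j)
    case 0
    have "(\<lambda>t. sin (real 1 * t)) \<in> Tr (Suc N)" using cosI 0 by (intro Tr.sinI) auto
    then show ?thesis by (rule Tr_eq) (simp add: 0)
  next
    case (Suc i)
    have a: "(\<lambda>t. sin (real (Suc (Suc i)) * t)) \<in> Tr (Suc N)" using cosI Suc by (intro Tr.sinI) auto
    have b: "(\<lambda>t. sin (real i * t)) \<in> Tr (Suc N)" using cosI Suc by (intro Tr.sinI) auto
    have "(\<lambda>t. (1/2) * sin (real (Suc (Suc i)) * t) + (-1/2) * sin (real i * t)) \<in> Tr (Suc N)"
      by (rule Tr_lin[OF a b])
    have e1: "real (Suc i) * t + t = real (Suc (Suc i)) * t" "real (Suc i) * t - t = real i * t" for t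
      by (simp_all add: algebra_simps)
    show ?thesis using Suc
      by (intro Tr_eq[OF \<open>(\<lambda>t. (1/2) * sin (real (Suc (Suc i)) * t) + (-1/2) * sin (real i * t)) \<in> Tr (Suc N)\<close>])
         (simp only: cos_times_sin e1, simp)
  qed
next
  case (sinI j)
  show ?case
  proof (cases j)
    case 0
    then show ?thesis by (intro Tr_eq[OF Tr.zeroI]) simp
  next
    case (Suc i)
    have a: "(\<lambda>t. cos (real (Suc (Suc i)) * t)) \<in> Tr (Suc N)" using sinI Suc by (intro Tr.cosI) auto
    have b: "(\<lambda>t. cos (real i * t)) \<in> Tr (Suc N)" using sinI Suc by (intro Tr.cosI) auto
    have "(\<lambda>t. (-1/2) * cos (real (Suc (Suc i)) * t) + (1/2) * cos (real i * t)) \<in> Tr (Suc N)"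
      by (rule Tr_lin[OF a b])
    then show ?thesis
      by (rule Tr_eq) (simp add: Suc sin_times_sin algebra_simps add_divide_distrib diff_divide_distrib)
  qed
next
  case zeroI
  then show ?case by (intro Tr_eq[OF Tr.zeroI]) simp
next
  case (addI f g)
  then show ?case by (intro Tr_eq[OF Tr.addI[OF addI.IH]]) (simp add: algebra_simps)
next
  case (scaleI f c)
  then show ?case by (intro Tr_eq[OF Tr.scaleI[OF scaleI.IH, where c=c]]) (simp add: algebra_simps)
qed

lemma Tr_mult_cos: "f \<in> Tr N \<Longrightarrow> (\<lambda>t. f t * cos t) \<in> Tr (Suc N)"
proof (induction rule: Tr.induct)
  case (cosI j)
  show ?case
  proof (cases j)
    case 0
    have "(\<lambda>t. cos (real 1 * t)) \<in> Tr (Suc N)" using cosI 0 by (intro Tr.cosI) auto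
    then show ?thesis by (rule Tr_eq) (simp add: 0)
  next
    case (Suc i)
    have a: "(\<lambda>t. cos (real (Suc (Suc i)) * t)) \<in> Tr (Suc N)" using cosI Suc by (intro Tr.cosI) auto
    have b: "(\<lambda>t. cos (real i * t)) \<in> Tr (Suc N)" using cosI Suc by (intro Tr.cosI) auto
    have "(\<lambda>t. (1/2) * cos (real (Suc (Suc i)) * t) + (1/2) * cos (real i * t)) \<in> Tr (Suc N)"
      by (rule Tr_lin[OF a b])
    have e1: "real (Suc i) * t + t = real (Suc (Suc i)) * t" "real (Suc i) * t - t = real i * t" for t
      by (simp_all add: algebra_simps)
    show ?thesis using Suc
      by (intro Tr_eq[OF \<open>(\<lambda>t. (1/2) * cos (real (Suc (Suc i)) * t) + (1/2) * cos (real i * t)) \<in> Tr (Suc N)\<close>])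
         (simp only: cos_times_cos e1, simp)
  qed
next
  case (sinI j)
  show ?case
  proof (cases j)
    case 0
    then show ?thesis by (intro Tr_eq[OF Tr.zeroI]) simp
  next
    case (Suc i)
    have a: "(\<lambda>t. sin (real (Suc (Suc i)) * t)) \<in> Tr (Suc N)" using sinI Suc by (intro Tr.sinI) auto
    have b: "(\<lambda>t. sin (real i * t)) \<in> Tr (Suc N)" using sinI Suc by (intro Tr.sinI) auto
    have "(\<lambda>t. (1/2) * sin (real (Suc (Suc i)) * t) + (1/2) * sin (real i * t)) \<in> Tr (Suc N)"
      by (rule Tr_lin[OF a b])
    have e1: "real (Suc i) * t + t = real (Suc (Suc i)) * t" "real (Suc i) * t - t = real i * t" for t
      by (simp_all add: algebra_simps)
    show ?thesis using Suc
      by (intro Tr_eq[OF \<open>(\<lambda>t. (1/2) * sin (real (Suc (Suc i)) * t) + (1/2) * sin (real i * t)) \<in> Tr (Suc N)\<close>])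
         (simp only: sin_times_cos e1, simp)
  qed
next
  case zeroI
  then show ?case by (intro Tr_eq[OF Tr.zeroI]) simp
next
  case (addI f g)
  then show ?case by (intro Tr_eq[OF Tr.addI[OF addI.IH]]) (simp add: algebra_simps)
next
  case (scaleI f c)
  then show ?case by (intro Tr_eq[OF Tr.scaleI[OF scaleI.IH, where c=c]]) (simp add: algebra_simps)
qed

lemma Tr_mult_shift: "f \<in> Tr N \<Longrightarrow> (\<lambda>t. f t * sin (t - s)) \<in> Tr (Suc N)"
  apply (rule Tr_eq[OF Tr_lin[OF Tr_mult_sin Tr_mult_cos, of f N f "cos s" "- sin s"]])
  apply (auto simp: sin_diff algebra_simps)
  done

lemma Tr_prod: "finite J \<Longrightarrow> (\<lambda>x. \<Prod>j\<in>J. sin (x - t j)) \<in> Tr (card J)"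
proof (induction J rule: finite_induct)
  case empty
  have "(\<lambda>x. cos (real 0 * x)) \<in> Tr 0" by (intro Tr.cosI) auto
  then show ?case by simp
next
  case (insert a F)
  have "(\<lambda>x. \<Prod>j\<in>insert a F. sin (x - t j)) = (\<lambda>x. (\<Prod>j\<in>F. sin (x - t j)) * sin (x - t a))"
    using insert.hyps by (simp add: mult.commute)
  then show ?case
    using Tr_mult_shift[OF insert.IH, of "t a"] insert.hyps by simp
qed

lemma Tr_rep:
  assumes "f \<in> Tr (2 * k - 1)" "k \<ge> 1"
  shows "\<exists>a. \<forall>x. f x = (\<Sum>j<2*k. a j * U k x j)"
  using assms(1)
proof (induction rule: Tr.induct)
  case (cosI j)
  then obtain m where m: "j = 2*m+1" "m < k" using assms(2)
    proof -
    have "odd j" using cosI assms(2) by presburger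
    then have "j = 2*(j div 2)+1" by presburger
    moreover have "j div 2 < k" using cosI assms(2) by linarith
    ultimately show ?thesis using that by blast
  qed
  show ?case
  proof (intro exI allI)
    fix x
    have "(\<Sum>j<2*k. (if j = 2*m then 1 else 0) * U k x j) = (\<Sum>j<2*k. if j = 2*m then U k x j else 0)"
      by (rule sum.cong) auto
    also have "\<dots> = U k x (2*m)" using m by (simp add: sum.delta)
    also have "\<dots> = cos (real j * x)" using m by (simp add: U_def)
    finally show "cos (real j * x) = (\<Sum>j<2*k. (if j = 2*m then 1 else 0) * U k x j)" by simp
  qed
next
  case (sinI j)
  then obtain m where m: "j = 2*m+1" "m < k" using assms(2)
    proof -
    have "odd j" using sinI assms(2) by presburger
    then have "j = 2*(j div 2)+1" by presburger
    moreover have "j div 2 < k" using sinI assms(2) by linarith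
    ultimately show ?thesis using that by blast
  qed
  show ?case
  proof (intro exI allI)
    fix x
    have "(\<Sum>j<2*k. (if j = 2*m+1 then 1 else 0) * U k x j) = (\<Sum>j<2*k. if j = 2*m+1 then U k x j else 0)"
      by (rule sum.cong) auto
    also have "\<dots> = U k x (2*m+1)" using m by (simp add: sum.delta)
    also have "\<dots> = sin (real j * x)" using m by (simp add: U_def)
    finally show "sin (real j * x) = (\<Sum>j<2*k. (if j = 2*m+1 then 1 else 0) * U k x j)" by simp
  qed
next
  case zeroI
  show ?case by (rule exI[of _ "\<lambda>_. 0"]) simp
next
  case (addI f g)
  then obtain a b where "\<forall>x. f x = (\<Sum>j<2*k. a j * U k x j)" "\<forall>x. g x = (\<Sum>j<2*k. b j * U k x j)" by blast
  then show ?case by (intro exI[of _ "\<lambda>j. a j + b j"]) (simp add: algebra_simps sum.distrib)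
next
  case (scaleI f c)
  then obtain a where "\<forall>x. f x = (\<Sum>j<2*k. a j * U k x j)" by blast
  then show ?case by (intro exI[of _ "\<lambda>j. c * a j"]) (simp add: algebra_simps sum_distrib_left)
qed

theorem lemma2p2:
  fixes k :: nat and t :: "nat \<Rightarrow> real"
  assumes "k \<ge> 1"
    and distinct_mod: "\<And>i j. i < 2 * k \<Longrightarrow> j < 2 * k \<Longrightarrow> i \<noteq> j \<Longrightarrow>
                         \<not> (\<exists>m::int. t i - t j = 2 * pi * of_int m)"
    and no_antipodal: "\<And>i j. i < 2 * k \<Longrightarrow> j < 2 * k \<Longrightarrow>
                         \<not> (\<exists>m::int. t i - t j = pi + 2 * pi * of_int m)"
  shows "lin_indep_family (2 * k) (2 * k) (\<lambda>i. U k (t i))"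
  unfolding lin_indep_family_def
proof (intro allI impI)
  fix c :: "nat \<Rightarrow> real" and i0
  assume hc: "\<forall>j<2 * k. (\<Sum>i<2 * k. c i * U k (t i) j) = 0" and i0: "i0 < 2 * k"
  define J where "J = {..<2*k} - {i0}"
  define p where "p = (\<lambda>x. \<Prod>j\<in>J. sin (x - t j))"
  have cJ: "card J = 2*k - 1" using i0 by (simp add: J_def)
  have "p \<in> Tr (2*k - 1)" unfolding p_def using Tr_prod[of J t] cJ by (simp add: J_def)
  then obtain a where ha: "\<forall>x. p x = (\<Sum>j<2*k. a j * U k x j)" using Tr_rep assms(1) by blast
  have "(\<Sum>i<2*k. c i * p (t i)) = (\<Sum>i<2*k. \<Sum>j<2*k. c i * (a j * U k (t i) j))"
    by (simp add: ha sum_distrib_left)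
  also have "\<dots> = (\<Sum>j<2*k. a j * (\<Sum>i<2*k. c i * U k (t i) j))"
    by (subst sum.swap) (simp add: sum_distrib_left algebra_simps)
  also have "\<dots> = 0" using hc by simp
  finally have s0: "(\<Sum>i<2*k. c i * p (t i)) = 0" .
  have z: "p (t i) = 0" if "i < 2*k" "i \<noteq> i0" for i
  proof -
    have "i \<in> J" using that by (simp add: J_def)
    then show ?thesis unfolding p_def by (intro prod_zero bexI[of _ i]) (auto simp: J_def)
  qed
  have "(\<Sum>i<2*k. c i * p (t i)) = (\<Sum>i<2*k. if i = i0 then c i * p (t i) else 0)"
    by (rule sum.cong) (auto simp: z)
  also have "\<dots> = c i0 * p (t i0)" using i0 by (simp add: sum.delta)
  finally have e: "c i0 * p (t i0) = 0" using s0 by simp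
  have "p (t i0) \<noteq> 0"
    unfolding p_def
  proof (subst prod_zero_iff)
    show "finite J" by (simp add: J_def)
    show "\<not> (\<exists>j\<in>J. sin (t i0 - t j) = 0)"
    proof
      assume "\<exists>j\<in>J. sin (t i0 - t j) = 0"
      then obtain j n where j: "j \<in> J" and n: "t i0 - t j = of_int n * pi"
        by (auto simp: sin_zero_iff_int2)
      have jk: "j < 2*k" "j \<noteq> i0" using j by (auto simp: J_def)
      show False
      proof (cases "even n")
        case True
        then obtain m where "n = 2*m" by auto
        then have "t i0 - t j = 2 * pi * of_int m" using n by simp
        then show False using distinct_mod[OF i0 jk(1)] jk(2) by metis
      next
        case False
        then obtain m where "n = 2*m+1" using oddE by blast
        then have "t i0 - t j = pi + 2 * pi * of_int m" using n by (simp add: algebra_simps)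
        then show False using no_antipodal[OF i0 jk(1)] by metis
      qed
    qed
  qed
  then show "c i0 = 0" using e by simp
qed

end
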